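(* Let $p=(z_0,\tau_0,Y_0)\in Son'$ with $z_0\neq0$ and $Y_0\neq0$, and suppose the Hugoniot$'$ curve $\mathcal{H}'(p)$ meets $\mathcal{C}$ in two distinct points $q_1,q_2$. Then $\sigma(p)$ lies strictly between $\sigma(q_1)$ and $\sigma(q_2)$ if and only if $(b_1+1)z_0^2<1$.
   Context: Fix real constants $a_1,a_2,a_3,a_4$ and $b_1>1$, and put $c=a_3-a_2>0$. Coordinates $(z,\tau,Y)\in\mathbb{R}^3$. Define $\widetilde U(z,\tau)=\frac{2cz}{z^2+1}+c\tau(z^2-1)$, $V_1(z,\tau)=\frac{c}{z^2+1}+c\tau z$, $U=(\widetilde U-a_1+a_4)/b_1$, $V=V_1-a_3$; the point $(z,\tau,Y)$ has right state $W'=(U-zY/2,\,V-Y/2)$ and shock speed $\sigma(z,\tau,Y)=\frac{c}{b_1}[(b_1+1)z^2-1]\tau+\frac{c}{b_1}\frac{(b_1+2)z}{z^2+1}+\sigma_0$, $\sigma_0=[(b_1+1)a_4-a_1]/b_1$. For $p\in\mathbb{R}^3$, the Hugoniot$'$ curve is $\mathcal{H}'(p)=\{q: W'(q)=W'(p)\}$. Let $\mathcal{C}=\{Y=0\}$ and let $Son'$ be the zero set of $c\,z[(b_1+1)z^2+3]\tau-[(b_1+1)z^2-1]\frac{Y}{2}+\frac{c[(b_1-1)z^2+1]}{z^2+1}$. *)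

theory Defs
  imports Complex_Main
begin

definition cc :: "real \<Rightarrow> real \<Rightarrow> real" where
  "cc a2 a3 = a3 - a2"

definition Utilde :: "real \<Rightarrow> real \<Rightarrow> real \<Rightarrow> real" where
  "Utilde c z \<tau> = 2 * c * z / (z^2 + 1) + c * \<tau> * (z^2 - 1)"

definition V1 :: "real \<Rightarrow> real \<Rightarrow> real \<Rightarrow> real" where
  "V1 c z \<tau> = c / (z^2 + 1) + c * \<tau> * z"

definition Ufun :: "real \<Rightarrow> real \<Rightarrow> real \<Rightarrow> real \<Rightarrow> real \<Rightarrow> real \<Rightarrow> real \<Rightarrow> real" where
  "Ufun a1 a2 a3 a4 b1 z \<tau> = (Utilde (cc a2 a3) z \<tau> - a1 + a4) / b1"

definition Vfun :: "real \<Rightarrow> real \<Rightarrow> real \<Rightarrow> real \<Rightarrow> real" where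
  "Vfun a2 a3 z \<tau> = V1 (cc a2 a3) z \<tau> - a3"

definition Wr :: "real \<Rightarrow> real \<Rightarrow> real \<Rightarrow> real \<Rightarrow> real \<Rightarrow> real \<times> real \<times> real \<Rightarrow> real \<times> real" where
  "Wr a1 a2 a3 a4 b1 p = (case p of (z, \<tau>, Y) \<Rightarrow>
      (Ufun a1 a2 a3 a4 b1 z \<tau> - z * Y / 2, Vfun a2 a3 z \<tau> - Y / 2))"

definition sigma0 :: "real \<Rightarrow> real \<Rightarrow> real \<Rightarrow> real" where
  "sigma0 a1 a4 b1 = ((b1 + 1) * a4 - a1) / b1"

definition sigma :: "real \<Rightarrow> real \<Rightarrow> real \<Rightarrow> real \<Rightarrow> real \<Rightarrow> real \<times> real \<times> real \<Rightarrow> real" where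
  "sigma a1 a2 a3 a4 b1 p = (case p of (z, \<tau>, Y) \<Rightarrow>
      (cc a2 a3 / b1) * ((b1 + 1) * z^2 - 1) * \<tau>
      + (cc a2 a3 / b1) * ((b1 + 2) * z / (z^2 + 1)) + sigma0 a1 a4 b1)"

definition Hugoniot' :: "real \<Rightarrow> real \<Rightarrow> real \<Rightarrow> real \<Rightarrow> real \<Rightarrow> real \<times> real \<times> real \<Rightarrow> (real \<times> real \<times> real) set" where
  "Hugoniot' a1 a2 a3 a4 b1 p = {q. Wr a1 a2 a3 a4 b1 q = Wr a1 a2 a3 a4 b1 p}"

definition Cplane :: "(real \<times> real \<times> real) set" where
  "Cplane = {q. snd (snd q) = 0}"

definition Son' :: "real \<Rightarrow> real \<Rightarrow> real \<Rightarrow> (real \<times> real \<times> real) set" where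
  "Son' a2 a3 b1 = {(z, \<tau>, Y).
      cc a2 a3 * z * ((b1 + 1) * z^2 + 3) * \<tau> - ((b1 + 1) * z^2 - 1) * (Y / 2)
      + cc a2 a3 * ((b1 - 1) * z^2 + 1) / (z^2 + 1) = 0}"

end

theory Submission imports Defs begin
lemma L1: "Utilde c z t - 2*z*V1 c z t = - c*t*(z^2+1)"
proof -
  have nz: "z^2+1 \<noteq> (0::real)" by (smt (verit) zero_le_power2)
  have "Utilde c z t - 2*z*V1 c z t = 2 * c * z / (z^2 + 1) - 2*z*(c / (z^2 + 1)) + c * t * (z^2 - 1) - 2*z*(c*t*z)"
    unfolding Utilde_def V1_def by (simp add: algebra_simps)
  also have "\<dots> = c * t * (z^2 - 1) - 2*z*(c*t*z)" by simp
  also have "\<dots> = - c*t*(z^2+1)" by (simp add: algebra_simps power2_eq_square)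
  finally show ?thesis .
qed
lemma L2: "V1 c z t * z^2 - Utilde c z t * z + c - V1 c z t = 0"
proof -
  have nz: "z^2+1 \<noteq> (0::real)" by (smt (verit) zero_le_power2)
  have "V1 c z t * z^2 - Utilde c z t * z + c - V1 c z t = c*(z^2 - 2*z*z - 1)/(z^2+1) + c + c*t*z*z^2 - c*t*z - c * t * (z^2 - 1)*z"
    unfolding Utilde_def V1_def by (simp add: algebra_simps add_divide_distrib diff_divide_distrib)
  also have "c*(z^2 - 2*z*z - 1)/(z^2+1) = - c" using nz by (simp add: field_simps power2_eq_square)
  finally show ?thesis by (simp add: algebra_simps)
qed

lemma L3: "b \<noteq> 0 \<Longrightarrow> sigma a1 a2 a3 a4 b (z,t,Y) = sigma0 a1 a4 b + (Utilde (cc a2 a3) z t + b*z*V1 (cc a2 a3) z t)/b"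
proof -
  assume b: "b \<noteq> 0"
  define w where "w = 1/(z^2+1)"
  define c where "c = cc a2 a3"
  have dw: "x/(z^2+1) = x*w" for x unfolding w_def by simp
  have s0: "sigma a1 a2 a3 a4 b (z,t,Y) = (c / b) * ((b + 1) * z^2 - 1) * t + (c / b) * ((b + 2) * z / (z^2+1)) + sigma0 a1 a4 b"
    unfolding sigma_def c_def by simp
  hence s1: "sigma a1 a2 a3 a4 b (z,t,Y) = (c / b) * ((b + 1) * z^2 - 1) * t + (c / b) * ((b + 2) * z * w) + sigma0 a1 a4 b"
    unfolding dw .
  have s2: "Utilde c z t + b*z*V1 c z t = 2*c*z*w + c * t * (z^2 - 1) + b*z*(c*w + c*t*z)"
    unfolding Utilde_def V1_def by (simp add: dw)
  have "(c / b) * ((b + 1) * z^2 - 1) * t + (c / b) * ((b + 2) * z * w) = (c*(((b + 1) * z^2 - 1) * t + (b + 2) * z * w))/b"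
    using b by (simp add: field_simps)
  hence e1: "sigma a1 a2 a3 a4 b (z,t,Y) = sigma0 a1 a4 b + (c*(((b + 1) * z^2 - 1) * t + (b + 2) * z * w))/b"
    using s1 by simp
  have e2: "Utilde c z t + b*z*V1 c z t = c*(((b + 1) * z^2 - 1) * t + (b + 2) * z * w)"
    using s2 by (simp add: algebra_simps power2_eq_square)
  show ?thesis unfolding c_def[symmetric] e1 e2 ..
qed

lemma L4:
  fixes c b z t Y :: real
  assumes son: "c * z * ((b + 1) * z^2 + 3) * t - ((b + 1) * z^2 - 1) * (Y / 2)
      + c * ((b - 1) * z^2 + 1) / (z^2 + 1) = 0"
  shows "z^2*(V1 c z t - Y/2 + Y)^2 - (Utilde c z t - b*z*Y/2)*z*(V1 c z t - Y/2 + Y)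
     + (V1 c z t - Y/2)*(c - (V1 c z t - Y/2)) = Y^2*((b+1)*z^2-1)/2"
proof -
  define B0 where "B0 = V1 c z t"
  define A0 where "A0 = Utilde c z t"
  define w where "w = 1/(z^2+1)"
  have nz: "z^2+1 \<noteq> (0::real)" by (smt (verit) zero_le_power2)
  have dw: "x/(z^2+1) = x*w" for x unfolding w_def by simp
  have ww: "w*(z^2+1) = 1" unfolding w_def using nz by simp
  have base: "A0*z - (B0*z^2 + c - B0) = 0" using L2[of c z t] unfolding A0_def B0_def by (simp add: algebra_simps)
  have e: "z^2*(B0 - Y/2 + Y)^2 - (A0 - b*z*Y/2)*z*(B0 - Y/2 + Y) + (B0 - Y/2)*(c - (B0 - Y/2))
      - Y*(B0*((b+1)*z^2+3)/2 - c + ((b+1)*z^2-1)*(Y/2)/2) = -(B0+Y/2)*(A0*z - (B0*z^2 + c - (B0::real)))"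
      by (simp add: field_simps power2_eq_square)
  have son': "c * z * ((b + 1) * z^2 + 3) * t - ((b + 1) * z^2 - 1) * (Y / 2)
      + c * ((b - 1) * z^2 + 1) * w = 0" using son by (simp add: dw)
  have h2: "B0*((b+1)*z^2+3) = c*((b+1)*z^2+3)*w + c * z * ((b + 1) * z^2 + 3) * t"
    unfolding B0_def V1_def dw by (simp add: algebra_simps)
  have h3: "c*((b+1)*z^2+3)*w - c * ((b - 1) * z^2 + 1) * w = 2*c"
  proof -
    have "c*((b+1)*z^2+3)*w - c * ((b - 1) * z^2 + 1) * w = 2*c*(w*(z^2+1))" by (simp add: algebra_simps)
    thus ?thesis using ww by simp
  qed
  have h4: "B0*((b+1)*z^2+3) = 2*c + ((b+1)*z^2-1)*(Y/2)"
    using h2 h3 son' by linarith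
  have "B0*((b+1)*z^2+3)/2 - c + ((b+1)*z^2-1)*(Y/2)/2 = ((b+1)*z^2-1)*(Y/2)"
    using h4 by linarith
  hence "Y*(B0*((b+1)*z^2+3)/2 - c + ((b+1)*z^2-1)*(Y/2)/2) = Y^2*((b+1)*z^2-1)/2"
    by (simp add: power2_eq_square)
  then show ?thesis using e base unfolding A0_def B0_def by simp
qed

lemma canc: "(b::real) \<noteq> 0 \<Longrightarrow> (X + b*P)/b - (X + b*Q)/b = P - Q"
  by (simp add: field_simps)

theorem mainTheorem12:
  fixes a1 a2 a3 a4 b1 z0 \<tau>0 Y0 :: real
    and q1 q2 :: "real \<times> real \<times> real"
  assumes hb1: "b1 > 1"
    and hc: "cc a2 a3 > 0"
    and hp: "(z0, \<tau>0, Y0) \<in> Son' a2 a3 b1"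
    and hz0: "z0 \<noteq> 0"
    and hY0: "Y0 \<noteq> 0"
    and hmeet: "Hugoniot' a1 a2 a3 a4 b1 (z0, \<tau>0, Y0) \<inter> Cplane = {q1, q2}"
    and hdist: "q1 \<noteq> q2"
  shows "((sigma a1 a2 a3 a4 b1 q1 < sigma a1 a2 a3 a4 b1 (z0, \<tau>0, Y0)
            \<and> sigma a1 a2 a3 a4 b1 (z0, \<tau>0, Y0) < sigma a1 a2 a3 a4 b1 q2)
          \<or> (sigma a1 a2 a3 a4 b1 q2 < sigma a1 a2 a3 a4 b1 (z0, \<tau>0, Y0)
            \<and> sigma a1 a2 a3 a4 b1 (z0, \<tau>0, Y0) < sigma a1 a2 a3 a4 b1 q1))
         \<longleftrightarrow> (b1 + 1) * z0^2 < 1"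
proof -
  define c where "c = cc a2 a3"
  define A where "A = Utilde c z0 \<tau>0 - b1*z0*Y0/2"
  define B where "B = V1 c z0 \<tau>0 - Y0/2"
  have b0: "b1 \<noteq> 0" using hb1 by simp
  have onC: "Utilde c z t = A \<and> V1 c z t = B \<and> Y = 0"
    if q: "(z,t,Y) \<in> Hugoniot' a1 a2 a3 a4 b1 (z0, \<tau>0, Y0) \<inter> Cplane" for z t Y
  proof -
    have Y: "Y = 0" using q by (simp add: Cplane_def)
    have W: "Wr a1 a2 a3 a4 b1 (z,t,Y) = Wr a1 a2 a3 a4 b1 (z0, \<tau>0, Y0)" using q by (simp add: Hugoniot'_def)
    have e1: "Ufun a1 a2 a3 a4 b1 z t = Ufun a1 a2 a3 a4 b1 z0 \<tau>0 - z0*Y0/2"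
      and e2: "Vfun a2 a3 z t = Vfun a2 a3 z0 \<tau>0 - Y0/2" using W Y by (simp_all add: Wr_def)
    from e1 have "(Utilde c z t - a1 + a4) / b1 = (Utilde c z0 \<tau>0 - a1 + a4) / b1 - z0*Y0/2"
      by (simp add: Ufun_def c_def)
    hence "b1*((Utilde c z t - a1 + a4) / b1) = b1*((Utilde c z0 \<tau>0 - a1 + a4) / b1) - b1*(z0*Y0/2)"
      by (simp add: right_diff_distrib)
    hence "Utilde c z t - a1 + a4 = Utilde c z0 \<tau>0 - a1 + a4 - b1*z0*Y0/2"
      using b0 by simp
    hence "Utilde c z t = A" by (simp add: A_def)
    moreover from e2 have "V1 c z t = B" by (simp add: Vfun_def B_def c_def)
    ultimately show ?thesis using Y by simp
  qed
  obtain z1 t1 Y1 where q1: "q1 = (z1,t1,Y1)" by (cases q1) auto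
  obtain z2 t2 Y2 where q2: "q2 = (z2,t2,Y2)" by (cases q2) auto
  have i1: "Utilde c z1 t1 = A" "V1 c z1 t1 = B" "Y1 = 0" using onC[of z1 t1 Y1] hmeet q1 by auto
  have i2: "Utilde c z2 t2 = A" "V1 c z2 t2 = B" "Y2 = 0" using onC[of z2 t2 Y2] hmeet q2 by auto
  have r1: "B*z1^2 - A*z1 + c - B = 0" using L2[of c z1 t1] i1 by simp
  have r2: "B*z2^2 - A*z2 + c - B = 0" using L2[of c z2 t2] i2 by simp
  have zne: "z1 \<noteq> z2"
  proof
    assume zz: "z1 = z2"
    have e1: "c*t1*(z1^2+1) = 2*z1*B - A" using L1[of c z1 t1] i1 by (simp add: algebra_simps)
    have e2: "c*t2*(z1^2+1) = 2*z1*B - A" using L1[of c z2 t2] i2 zz by (simp add: algebra_simps)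
    have "(c*(z1^2+1))*(t1-t2) = 0" using e1 e2 by (simp add: algebra_simps)
    moreover have "c \<noteq> 0" using hc c_def by simp
    moreover have "z1^2+1 \<noteq> 0" by (smt (verit) zero_le_power2)
    ultimately have "t1 = t2" by simp
    thus False using hdist q1 q2 zz i1 i2 by simp
  qed
  have v1: "B*(z1+z2) = A"
  proof -
    have "(z1 - z2)*(B*(z1+z2) - A) = 0" using r1 r2 by (simp add: algebra_simps power2_eq_square)
    thus ?thesis using zne by simp
  qed
  have v2: "B*z1*z2 = c - B"
  proof -
    have "B*z1^2 - B*(z1+z2)*z1 + c - B = 0" using r1 v1 by simp
    thus ?thesis by (simp add: algebra_simps power2_eq_square)
  qed
  have sp: "sigma a1 a2 a3 a4 b1 (z0, \<tau>0, Y0) = sigma0 a1 a4 b1 + (A + b1*(z0*Y0/2 + z0*(B+Y0/2)))/b1"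
    using L3[OF b0, of a1 a2 a3 a4 z0 \<tau>0 Y0] by (simp add: A_def B_def c_def algebra_simps)
  have d1: "sigma a1 a2 a3 a4 b1 q1 - sigma a1 a2 a3 a4 b1 (z0, \<tau>0, Y0) = z1*B - z0*(B+Y0)"
  proof -
    have "sigma a1 a2 a3 a4 b1 q1 = sigma0 a1 a4 b1 + (A + b1*(z1*B))/b1"
      using L3[OF b0, of a1 a2 a3 a4 z1 t1 Y1] i1 q1 unfolding c_def[symmetric] by simp
    hence "sigma a1 a2 a3 a4 b1 q1 - sigma a1 a2 a3 a4 b1 (z0, \<tau>0, Y0) = z1*B - (z0*Y0/2 + z0*(B+Y0/2))"
      using sp canc[OF b0] by simp
    thus ?thesis by (simp add: algebra_simps)
  qed
  have d2: "sigma a1 a2 a3 a4 b1 q2 - sigma a1 a2 a3 a4 b1 (z0, \<tau>0, Y0) = z2*B - z0*(B+Y0)"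
  proof -
    have "sigma a1 a2 a3 a4 b1 q2 = sigma0 a1 a4 b1 + (A + b1*(z2*B))/b1"
      using L3[OF b0, of a1 a2 a3 a4 z2 t2 Y2] i2 q2 unfolding c_def[symmetric] by simp
    hence "sigma a1 a2 a3 a4 b1 q2 - sigma a1 a2 a3 a4 b1 (z0, \<tau>0, Y0) = z2*B - (z0*Y0/2 + z0*(B+Y0/2))"
      using sp canc[OF b0] by simp
    thus ?thesis by (simp add: algebra_simps)
  qed
  have son: "c * z0 * ((b1 + 1) * z0^2 + 3) * \<tau>0 - ((b1 + 1) * z0^2 - 1) * (Y0 / 2)
      + c * ((b1 - 1) * z0^2 + 1) / (z0^2 + 1) = 0" using hp by (simp add: Son'_def c_def)
  have prod: "(z1*B - z0*(B+Y0))*(z2*B - z0*(B+Y0)) = Y0^2*((b1+1)*z0^2-1)/2"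
  proof -
    have "(z1*B - z0*(B+Y0))*(z2*B - z0*(B+Y0)) = B*(B*z1*z2) - z0*(B+Y0)*(B*(z1+z2)) + z0^2*(B+Y0)^2"
      by (simp add: algebra_simps power2_eq_square)
    also have "\<dots> = z0^2*(B+Y0)^2 - A*z0*(B+Y0) + B*(c-B)" unfolding v1 v2 by (simp add: algebra_simps)
    also have "\<dots> = Y0^2*((b1+1)*z0^2-1)/2" using L4[OF son] unfolding A_def B_def
      by (simp add: algebra_simps)
    finally show ?thesis .
  qed
  have Yp: "Y0^2 > 0" using hY0 by simp
  have "(sigma a1 a2 a3 a4 b1 q1 < sigma a1 a2 a3 a4 b1 (z0, \<tau>0, Y0)
            \<and> sigma a1 a2 a3 a4 b1 (z0, \<tau>0, Y0) < sigma a1 a2 a3 a4 b1 q2)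
          \<or> (sigma a1 a2 a3 a4 b1 q2 < sigma a1 a2 a3 a4 b1 (z0, \<tau>0, Y0)
            \<and> sigma a1 a2 a3 a4 b1 (z0, \<tau>0, Y0) < sigma a1 a2 a3 a4 b1 q1)
      \<longleftrightarrow> (z1*B - z0*(B+Y0))*(z2*B - z0*(B+Y0)) < 0"
    unfolding mult_less_0_iff using d1 d2 by auto
  also have "\<dots> \<longleftrightarrow> (b1+1)*z0^2 - 1 < 0" unfolding prod using Yp
    by (simp add: mult_less_0_iff)
  finally show ?thesis by simp
qed
end
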